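(* Let $X$ be a compactum, let $n\geq2$, and let $f:X\to X$ be a function. Consider the statements: (1) $f$ is an $F$-system; (2) $F_n(f)$ is an $F$-system; (3) $SF_n(f)$ is an $F$-system. Then (2) and (3) are equivalent, and (2) implies (1).
   Context: A compactum is a nondegenerate compact, perfect, Hausdorff topological space. $F_n(X)$ is the set of nonempty subsets of $X$ with at most $n$ points, with the Vietoris topology; $F_1(X)=\{\{x\}:x\in X\}$; $F_n(f)(A)=f(A)$. $SF_n(X)=F_n(X)/F_1(X)$ is the quotient collapsing $F_1(X)$ to a point, $q$ the quotient map, $F_X=q(F_1(X))$, and $SF_n(f)(\chi)=q(F_n(f)(q^{-1}(\chi)))$ for $\chi\neq F_X$, $SF_n(f)(F_X)=F_X$. A function $g:Z\to Z$ is transitive if for all nonempty open $U,V$ there is $k\in\mathbb{N}$ with $g^k(U)\cap V\neq\emptyset$; totally transitive if $g^m$ is transitive for all $m\in\mathbb{N}$; $g$ is an $F$-system if it is totally transitive and its set of periodic points ($z$ with $g^k(z)=z$ for some $k\in\mathbb{N}$) is dense in $Z$. *)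

theory Defs
  imports "HOL-Analysis.Analysis"
begin

definition compactum :: "'a topology \<Rightarrow> bool" where
  "compactum X \<longleftrightarrow> compact_space X \<and> Hausdorff_space X
     \<and> X derived_set_of (topspace X) = topspace X
     \<and> (\<exists>x\<in>topspace X. \<exists>y\<in>topspace X. x \<noteq> y)"

definition quotient_topology :: "'a topology \<Rightarrow> ('a \<Rightarrow> 'b) \<Rightarrow> 'b topology" where
  "quotient_topology X q = topology (\<lambda>U. U \<subseteq> q ` topspace X \<and>
       openin X {x \<in> topspace X. q x \<in> U})"

lemma istopology_quotient:
  "istopology (\<lambda>U. U \<subseteq> q ` topspace X \<and> openin X {x \<in> topspace X. q x \<in> U})"
proof -
  have 1: "openin X {x \<in> topspace X. q x \<in> S \<inter> T}"
    if "openin X {x \<in> topspace X. q x \<in> S}" "openin X {x \<in> topspace X. q x \<in> T}" for S T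
  proof -
    have "{x \<in> topspace X. q x \<in> S \<inter> T} = {x \<in> topspace X. q x \<in> S} \<inter> {x \<in> topspace X. q x \<in> T}"
      by auto
    then show ?thesis using that by auto
  qed
  have 2: "openin X {x \<in> topspace X. q x \<in> \<Union>K}"
    if "\<forall>S\<in>K. openin X {x \<in> topspace X. q x \<in> S}" for K
  proof -
    have "{x \<in> topspace X. q x \<in> \<Union>K} = (\<Union>S\<in>K. {x \<in> topspace X. q x \<in> S})"
      by auto
    moreover have "openin X (\<Union>S\<in>K. {x \<in> topspace X. q x \<in> S})"
      using that by (intro openin_Union) auto
    ultimately show ?thesis by simp
  qed
  show ?thesis
    unfolding istopology_def using 1 2 by blast
qed

lemma openin_quotient_topology:
  "openin (quotient_topology X q) U \<longleftrightarrow>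
     U \<subseteq> q ` topspace X \<and> openin X {x \<in> topspace X. q x \<in> U}"
  unfolding quotient_topology_def
  by (simp only: topology_inverse'[OF istopology_quotient])

definition Fn_set :: "nat \<Rightarrow> 'a topology \<Rightarrow> 'a set set" where
  "Fn_set n X = {A. A \<subseteq> topspace X \<and> A \<noteq> {} \<and> finite A \<and> card A \<le> n}"

definition F1_set :: "'a topology \<Rightarrow> 'a set set" where
  "F1_set X = {{x} | x. x \<in> topspace X}"

text \<open>Vietoris topology on \<open>F_n(X)\<close> (subspace of the Vietoris hyperspace), generated by
  the sets \<open>\<langle>U\<rangle> = {A. A \<subseteq> U}\<close> and \<open>{A. A \<inter> U \<noteq> {}}\<close> for \<open>U\<close> open.\<close>
definition Fn :: "nat \<Rightarrow> 'a topology \<Rightarrow> 'a set topology" where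
  "Fn n X = topology_generated_by
     ({{A \<in> Fn_set n X. A \<subseteq> U} | U. openin X U}
      \<union> {{A \<in> Fn_set n X. A \<inter> U \<noteq> {}} | U. openin X U})"

definition Fn_map :: "('a \<Rightarrow> 'a) \<Rightarrow> 'a set \<Rightarrow> 'a set" where
  "Fn_map f A = f ` A"

text \<open>The quotient map \<open>q : F_n(X) \<rightarrow> SF_n(X)\<close>; points of \<open>SF_n(X)\<close> are the equivalence
  classes, i.e. \<open>F_1(X)\<close> itself and singletons \<open>{A}\<close> with \<open>A \<notin> F_1(X)\<close>.\<close>
definition SFq :: "nat \<Rightarrow> 'a topology \<Rightarrow> 'a set \<Rightarrow> 'a set set" where
  "SFq n X A = (if A \<in> F1_set X then F1_set X else {A})"

definition SFn :: "nat \<Rightarrow> 'a topology \<Rightarrow> 'a set set topology" where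
  "SFn n X = quotient_topology (Fn n X) (SFq n X)"

definition SF_point :: "'a topology \<Rightarrow> 'a set set" where
  "SF_point X = F1_set X"

definition SFn_map :: "nat \<Rightarrow> 'a topology \<Rightarrow> ('a \<Rightarrow> 'a) \<Rightarrow> 'a set set \<Rightarrow> 'a set set" where
  "SFn_map n X f c = (if c = SF_point X then SF_point X
      else SFq n X (Fn_map f (the_elem {A \<in> topspace (Fn n X). SFq n X A = c})))"

definition dyn_transitive :: "'b topology \<Rightarrow> ('b \<Rightarrow> 'b) \<Rightarrow> bool" where
  "dyn_transitive Z g \<longleftrightarrow>
     (\<forall>U V. openin Z U \<and> U \<noteq> {} \<and> openin Z V \<and> V \<noteq> {} \<longrightarrow>
        (\<exists>k\<ge>1. (g ^^ k) ` U \<inter> V \<noteq> {}))"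

definition totally_transitive :: "'b topology \<Rightarrow> ('b \<Rightarrow> 'b) \<Rightarrow> bool" where
  "totally_transitive Z g \<longleftrightarrow> (\<forall>m\<ge>1. dyn_transitive Z (g ^^ m))"

definition periodic_points :: "'b topology \<Rightarrow> ('b \<Rightarrow> 'b) \<Rightarrow> 'b set" where
  "periodic_points Z g = {z \<in> topspace Z. \<exists>k\<ge>1. (g ^^ k) z = z}"

definition F_system :: "'b topology \<Rightarrow> ('b \<Rightarrow> 'b) \<Rightarrow> bool" where
  "F_system Z g \<longleftrightarrow> totally_transitive Z g \<and> Z closure_of (periodic_points Z g) = topspace Z"

end

theory Submission
  imports Defs
begin

lemma dense_meet:
  assumes "Z closure_of P = topspace Z" "openin Z W" "W \<noteq> {}"
  shows "\<exists>p\<in>P. p \<in> W"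
proof -
  obtain w where "w \<in> W" using assms(3) by blast
  then have "w \<in> Z closure_of P" using assms(1,2) openin_subset by blast
  then show ?thesis using \<open>w \<in> W\<close> assms(2) unfolding in_closure_of by blast
qed

lemma dense_intro:
  assumes "P \<subseteq> topspace Z" "\<And>W. openin Z W \<Longrightarrow> W \<noteq> {} \<Longrightarrow> \<exists>p\<in>P. p \<in> W"
  shows "Z closure_of P = topspace Z"
proof
  show "Z closure_of P \<subseteq> topspace Z" by (rule closure_of_subset_topspace)
  show "topspace Z \<subseteq> Z closure_of P"
  proof
    fix x assume x: "x \<in> topspace Z"
    have "\<exists>y. y \<in> P \<and> y \<in> T" if xT: "x \<in> T \<and> openin Z T" for T
    proof -
      have "T \<noteq> {}" "openin Z T" using xT by auto
      then obtain p where "p \<in> P" "p \<in> T" using assms(2) by meson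
      then show ?thesis by blast
    qed
    then show "x \<in> Z closure_of P" unfolding in_closure_of using x by simp
  qed
qed

lemma preim_ne: "U \<subseteq> q ` A \<Longrightarrow> U \<noteq> {} \<Longrightarrow> {x\<in>A. q x \<in> U} \<noteq> {}"
  by auto

lemma dtD: "dyn_transitive Z g \<Longrightarrow> openin Z U \<Longrightarrow> U \<noteq> {} \<Longrightarrow> openin Z V \<Longrightarrow> V \<noteq> {}
   \<Longrightarrow> \<exists>k\<ge>1. (g ^^ k) ` U \<inter> V \<noteq> {}"
  unfolding dyn_transitive_def by blast

lemma ttD: "totally_transitive Z g \<Longrightarrow> (m::nat) \<ge> 1 \<Longrightarrow> dyn_transitive Z (g ^^ m)"
  unfolding totally_transitive_def by blast

lemma factor_F_system:
  assumes surj: "q ` topspace T = topspace S"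
    and cont: "\<And>U. openin S U \<Longrightarrow> openin T {x\<in>topspace T. q x \<in> U}"
    and gmap: "\<And>x. x \<in> topspace T \<Longrightarrow> g x \<in> topspace T"
    and comm: "\<And>x. x \<in> topspace T \<Longrightarrow> h (q x) = q (g x)"
    and F: "F_system T g"
  shows "F_system S h"
proof -
  have it: "(g ^^ j) x \<in> topspace T \<and> (h ^^ j) (q x) = q ((g ^^ j) x)"
    if "x \<in> topspace T" for x j
    using that by (induction j) (auto simp: gmap comm)
  have tt: "totally_transitive T g" and dn: "T closure_of periodic_points T g = topspace T"
    using F unfolding F_system_def by auto
  have "totally_transitive S h"
    unfolding totally_transitive_def dyn_transitive_def
  proof (intro allI impI)
    fix m :: nat and U V
    assume m: "m \<ge> 1" and UV: "openin S U \<and> U \<noteq> {} \<and> openin S V \<and> V \<noteq> {}"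
    define U' where "U' = {x\<in>topspace T. q x \<in> U}"
    define V' where "V' = {x\<in>topspace T. q x \<in> V}"
    have "U' \<noteq> {}" unfolding U'_def
      by (rule preim_ne) (use UV surj openin_subset[of S U] in auto)
    have "V' \<noteq> {}" unfolding V'_def
      by (rule preim_ne) (use UV surj openin_subset[of S V] in auto)
    have "openin T U'" "openin T V'" unfolding U'_def V'_def using UV cont by auto
    then obtain k where k: "k \<ge> 1" "((g ^^ m) ^^ k) ` U' \<inter> V' \<noteq> {}"
      using dtD[OF ttD[OF tt m] \<open>openin T U'\<close> \<open>U' \<noteq> {}\<close> \<open>openin T V'\<close> \<open>V' \<noteq> {}\<close>] by blast
    then obtain x where x: "x \<in> U'" "(g ^^ (m*k)) x \<in> V'"
      by (auto simp: funpow_mult)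
    have "((h ^^ m) ^^ k) (q x) = q ((g ^^ (m*k)) x)"
      using it[of x "m*k"] x unfolding U'_def by (simp add: funpow_mult)
    then have "((h ^^ m) ^^ k) (q x) \<in> V" using x unfolding V'_def by simp
    moreover have "q x \<in> U" using x unfolding U'_def by simp
    ultimately show "\<exists>k\<ge>1. ((h ^^ m) ^^ k) ` U \<inter> V \<noteq> {}" using k(1) by blast
  qed
  moreover have "S closure_of periodic_points S h = topspace S"
  proof (rule dense_intro)
    show "periodic_points S h \<subseteq> topspace S" unfolding periodic_points_def by blast
    fix W assume W: "openin S W" "W \<noteq> {}"
    define W' where "W' = {x\<in>topspace T. q x \<in> W}"
    have "W' \<noteq> {}" unfolding W'_def
      by (rule preim_ne) (use W surj openin_subset[of S W] in auto)
    have "openin T W'" unfolding W'_def using W cont by auto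
    with \<open>W' \<noteq> {}\<close> obtain p where p: "p \<in> periodic_points T g" "p \<in> W'"
      using dense_meet[OF dn] by blast
    then obtain k where k: "k \<ge> 1" "(g ^^ k) p = p" "p \<in> topspace T"
      unfolding periodic_points_def by blast
    have "(h ^^ k) (q p) = q p" using it[of p k] k by simp
    moreover have "q p \<in> topspace S" using k(3) surj by blast
    ultimately have "q p \<in> periodic_points S h" using k(1) unfolding periodic_points_def by blast
    then show "\<exists>p\<in>periodic_points S h. p \<in> W" using p(2) unfolding W'_def by blast
  qed
  ultimately show ?thesis unfolding F_system_def by blast
qed

lemma orbit_periodic:
  assumes "finite A" "p ` A \<subseteq> A" "a \<in> A"
  shows "\<exists>b\<in>A. \<exists>d\<ge>1. (p ^^ d) b = b"
proof -
  have sub: "(p ^^ j) a \<in> A" for j by (induction j) (use assms in auto)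
  have "\<not> inj (\<lambda>j::nat. (p ^^ j) a)"
  proof
    assume "inj (\<lambda>j::nat. (p ^^ j) a)"
    then have "infinite (range (\<lambda>j::nat. (p ^^ j) a))"
      using finite_imageD infinite_UNIV_nat by blast
    moreover have "range (\<lambda>j::nat. (p ^^ j) a) \<subseteq> A" using sub by blast
    ultimately show False using assms(1) finite_subset by blast
  qed
  then obtain i j where ij: "i \<noteq> j" "(p ^^ i) a = (p ^^ j) a" unfolding inj_def by blast
  then obtain i j where ij: "i < j" "(p ^^ i) a = (p ^^ j) a"
    by (metis linorder_neqE_nat)
  have e: "(p ^^ (j - i + i)) a = (p ^^ (j - i)) ((p ^^ i) a)" by (simp add: funpow_add)
  have "j - i + i = j" using ij(1) by simp
  then have "(p ^^ (j - i)) ((p ^^ i) a) = (p ^^ j) a" using e by simp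
  then show ?thesis using ij sub[of i] by (intro bexI[of _ "(p ^^ i) a"] exI[of _ "j - i"]) auto
qed


lemma Fn_map_funpow: "(Fn_map f ^^ k) A = (f ^^ k) ` A"
  by (induction k) (auto simp: Fn_map_def image_comp)

locale setting =
  fixes X :: "'a topology" and n :: nat and f :: "'a \<Rightarrow> 'a"
  assumes cpt: "compactum X" and n2: "n \<ge> 2"
    and fmap: "f ` topspace X \<subseteq> topspace X"
begin

abbreviation "FS \<equiv> Fn_set n X"
abbreviation "F1 \<equiv> F1_set X"
abbreviation "q \<equiv> SFq n X"

lemma TS: "topspace (Fn n X) = FS"
proof -
  have "{A \<in> FS. A \<inter> topspace X \<noteq> {}} = FS" unfolding Fn_set_def by auto
  then show ?thesis unfolding Fn_def topology_generated_by_topspace by blast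
qed

lemma open_sub: "openin X U \<Longrightarrow> openin (Fn n X) {A \<in> FS. A \<subseteq> U}"
  unfolding Fn_def by (rule topology_generated_by_Basis) blast

lemma open_hit: "openin X U \<Longrightarrow> openin (Fn n X) {A \<in> FS. A \<inter> U \<noteq> {}}"
  unfolding Fn_def by (rule topology_generated_by_Basis) blast

lemma F1_sub: "F1 \<subseteq> FS"
  using n2 unfolding F1_set_def Fn_set_def by auto

lemma q_F1: "A \<in> F1 \<Longrightarrow> q A = F1" unfolding SFq_def by simp
lemma q_nF1: "A \<notin> F1 \<Longrightarrow> q A = {A}" unfolding SFq_def by simp

lemma q_eq_single: "B \<notin> F1 \<Longrightarrow> q C = {B} \<Longrightarrow> C = B"
  unfolding SFq_def by (auto split: if_splits)

lemma g_FS: "A \<in> FS \<Longrightarrow> Fn_map f A \<in> FS"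
  using fmap unfolding Fn_set_def Fn_map_def by (auto intro: card_image_le order_trans)

lemma openin_SF: "openin (SFn n X) U \<longleftrightarrow> U \<subseteq> q ` FS \<and> openin (Fn n X) {A \<in> FS. q A \<in> U}"
  unfolding SFn_def openin_quotient_topology TS by simp

lemma TS_SF: "topspace (SFn n X) = q ` FS"
proof
  show "topspace (SFn n X) \<subseteq> q ` FS"
    unfolding topspace_def openin_SF by blast
  have "openin (SFn n X) (q ` FS)"
  proof -
    have "{A \<in> FS. q A \<in> q ` FS} = FS" by blast
    then show ?thesis unfolding openin_SF using openin_topspace[of "Fn n X"] TS by simp
  qed
  then show "q ` FS \<subseteq> topspace (SFn n X)" using openin_subset by blast
qed

lemma comm: "A \<in> FS \<Longrightarrow> SFn_map n X f (q A) = q (Fn_map f A)"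
proof (cases "A \<in> F1")
  case True
  then obtain x where x: "A = {x}" "x \<in> topspace X" unfolding F1_set_def by blast
  then have "Fn_map f A \<in> F1" using fmap unfolding F1_set_def Fn_map_def by auto
  then show ?thesis using True unfolding SFn_map_def SF_point_def by (simp add: q_F1)
next
  case False
  assume A: "A \<in> FS"
  have ne: "q A \<noteq> SF_point X" using False unfolding SF_point_def q_nF1[OF False] by auto
  have qA: "q A = {A}" by (rule q_nF1[OF False])
  have "{A' \<in> topspace (Fn n X). q A' = q A} = {A}"
    using A q_eq_single[OF False] unfolding TS by (auto simp: qA)
  then show ?thesis using ne unfolding SFn_map_def by simp
qed

lemma open_nF1: "openin (Fn n X) (FS - F1)"
proof (subst openin_subopen, intro ballI)
  fix A assume A: "A \<in> FS - F1"
  have "A \<noteq> {}" "A \<subseteq> topspace X" using A unfolding Fn_set_def by auto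
  then obtain x where x: "x \<in> A" by blast
  have "\<exists>y\<in>A. y \<noteq> x"
  proof (rule ccontr)
    assume "\<not> ?thesis"
    then have "A = {x}" using x by blast
    then show False using A x \<open>A \<subseteq> topspace X\<close> unfolding F1_set_def by auto
  qed
  then obtain y where y: "y \<in> A" "y \<noteq> x" by blast
  have H: "Hausdorff_space X" using cpt unfolding compactum_def by blast
  obtain U V where UV: "openin X U" "openin X V" "x \<in> U" "y \<in> V" "disjnt U V"
  proof -
    have xy: "x \<in> topspace X" "y \<in> topspace X" "x \<noteq> y"
      using x y \<open>A \<subseteq> topspace X\<close> by auto
    show ?thesis using H xy unfolding Hausdorff_space_def by (meson that)
  qed
  define W where "W = {B \<in> FS. B \<inter> U \<noteq> {}} \<inter> {B \<in> FS. B \<inter> V \<noteq> {}}"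
  have "openin (Fn n X) W" unfolding W_def using open_hit UV by blast
  moreover have "A \<in> W" using A x y UV unfolding W_def by auto
  moreover have "W \<subseteq> FS - F1"
    using UV(5) unfolding W_def F1_set_def disjnt_def by auto
  ultimately show "\<exists>T. openin (Fn n X) T \<and> A \<in> T \<and> T \<subseteq> FS - F1" by blast
qed

lemma nbhd_gen:
  assumes "generate_topology_on
     ({{A \<in> FS. A \<subseteq> U} | U. openin X U} \<union> {{A \<in> FS. A \<inter> U \<noteq> {}} | U. openin X U}) T"
  shows "{x} \<in> T \<Longrightarrow> \<exists>W. openin X W \<and> x \<in> W \<and> (\<forall>B\<in>FS. B \<subseteq> W \<longrightarrow> B \<in> T)"
  using assms
proof (induction T)
  case Empty
  then show ?case by simp
next
  case (Int a b)
  then obtain W1 W2 where "openin X W1" "x \<in> W1" "\<forall>B\<in>FS. B \<subseteq> W1 \<longrightarrow> B \<in> a"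
    "openin X W2" "x \<in> W2" "\<forall>B\<in>FS. B \<subseteq> W2 \<longrightarrow> B \<in> b" by blast
  then show ?case by (intro exI[of _ "W1 \<inter> W2"]) auto
next
  case (UN K)
  then obtain k where kk: "k \<in> K" "{x} \<in> k" by blast
  then obtain W where "openin X W" "x \<in> W" "\<forall>B\<in>FS. B \<subseteq> W \<longrightarrow> B \<in> k"
    using UN.IH by meson
  then show ?case using kk(1) by (intro exI[of _ W]) blast
next
  case (Basis s)
  from Basis.hyps obtain V where V: "openin X V" "s = {A\<in>FS. A \<subseteq> V} \<or> s = {A\<in>FS. A \<inter> V \<noteq> {}}"
    by blast
  have "x \<in> V" using V(2) Basis.prems by auto
  moreover have "\<forall>B\<in>FS. B \<subseteq> V \<longrightarrow> B \<in> s" using V(2) unfolding Fn_set_def by auto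
  ultimately show ?case using V(1) by blast
qed

lemma open_ne: "openin (Fn n X) U \<Longrightarrow> U \<noteq> {} \<Longrightarrow> U - F1 \<noteq> {}"
proof -
  assume U: "openin (Fn n X) U" "U \<noteq> {}"
  then obtain A where A: "A \<in> U" by blast
  have AFS: "A \<in> FS" using A openin_subset[OF U(1)] TS by blast
  show "U - F1 \<noteq> {}"
  proof (cases "A \<in> F1")
    case False then show ?thesis using A by blast
  next
    case True
    then obtain x where x: "A = {x}" "x \<in> topspace X" unfolding F1_set_def by blast
    have g: "generate_topology_on
     ({{A \<in> FS. A \<subseteq> U} | U. openin X U} \<union> {{A \<in> FS. A \<inter> U \<noteq> {}} | U. openin X U}) U"
      using U(1) unfolding Fn_def openin_topology_generated_by_iff .
    obtain W where W: "openin X W" "x \<in> W" "\<forall>B\<in>FS. B \<subseteq> W \<longrightarrow> B \<in> U"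
      using nbhd_gen[OF g] A x by blast
    have "x \<in> X derived_set_of topspace X" using cpt x unfolding compactum_def by blast
    then obtain y where y: "y \<noteq> x" "y \<in> topspace X" "y \<in> W"
      using W unfolding in_derived_set_of by blast
    have "{x, y} \<in> FS" using x y n2 unfolding Fn_set_def by auto
    then have "{x, y} \<in> U" using W(2,3) y(3) by simp
    moreover have "{x, y} \<notin> F1" using y unfolding F1_set_def by (auto simp: doubleton_eq_iff)
    ultimately show ?thesis by blast
  qed
qed

lemma open_img: "openin (Fn n X) U \<Longrightarrow> openin (SFn n X) (q ` (U - F1))"
proof -
  assume U: "openin (Fn n X) U"
  have sub: "U \<subseteq> FS" using openin_subset[OF U] TS by simp
  have "{A \<in> FS. q A \<in> q ` (U - F1)} = U \<inter> (FS - F1)"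
  proof safe
    fix A B assume "A \<in> FS" "q A = q B" "B \<in> U" "B \<notin> F1"
    then show "A \<in> U" using q_eq_single[of B A] q_nF1[of B] by simp
  next
    fix A B assume "A \<in> FS" "q A = q B" "B \<in> U" "B \<notin> F1" "A \<in> F1"
    then show False using q_eq_single[of B A] q_nF1[of B] by simp
  qed (use sub in auto)
  moreover have "openin (Fn n X) (U \<inter> (FS - F1))" using U open_nF1 by blast
  ultimately show ?thesis unfolding openin_SF using sub by auto
qed

lemma it: "A \<in> FS \<Longrightarrow> (Fn_map f ^^ j) A \<in> FS \<and> (SFn_map n X f ^^ j) (q A) = q ((Fn_map f ^^ j) A)"
  by (induction j) (auto simp: g_FS comm)

lemma two_to_three: "F_system (Fn n X) (Fn_map f) \<Longrightarrow> F_system (SFn n X) (SFn_map n X f)"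
  by (rule factor_F_system[where q = q]) (auto simp: TS TS_SF openin_SF g_FS comm)

lemma three_to_two:
  assumes F: "F_system (SFn n X) (SFn_map n X f)"
  shows "F_system (Fn n X) (Fn_map f)"
proof -
  let ?h = "SFn_map n X f" and ?g = "Fn_map f"
  have tt: "totally_transitive (SFn n X) ?h" and dn: "SFn n X closure_of periodic_points (SFn n X) ?h = topspace (SFn n X)"
    using F unfolding F_system_def by auto
  have "totally_transitive (Fn n X) ?g"
    unfolding totally_transitive_def dyn_transitive_def
  proof (intro allI impI)
    fix m :: nat and U V
    assume m: "m \<ge> 1" and UV: "openin (Fn n X) U \<and> U \<noteq> {} \<and> openin (Fn n X) V \<and> V \<noteq> {}"
    have a: "q ` (U - F1) \<noteq> {}" "q ` (V - F1) \<noteq> {}" "openin (SFn n X) (q ` (U - F1))" "openin (SFn n X) (q ` (V - F1))"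
      using UV open_ne open_img by auto
    obtain k where k: "k \<ge> 1" "((?h ^^ m) ^^ k) ` (q ` (U - F1)) \<inter> q ` (V - F1) \<noteq> {}"
      using dtD[OF ttD[OF tt m] a(3) a(1) a(4) a(2)] by blast
    then obtain A B where AB: "A \<in> U" "A \<notin> F1" "B \<in> V" "B \<notin> F1" "(?h ^^ (m*k)) (q A) = q B"
      by (auto simp: funpow_mult)
    have AFS: "A \<in> FS" using AB(1) openin_subset[of "Fn n X" U] UV TS by auto
    have "q ((?g ^^ (m*k)) A) = {B}" using AB it[OF AFS, of "m*k"] q_nF1 by simp
    then have "(?g ^^ (m*k)) A = B" using q_eq_single AB(4) by blast
    then have "((?g ^^ m) ^^ k) A \<in> V" using AB(3) by (simp add: funpow_mult)
    then show "\<exists>k\<ge>1. ((?g ^^ m) ^^ k) ` U \<inter> V \<noteq> {}" using k(1) AB(1) by blast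
  qed
  moreover have "Fn n X closure_of periodic_points (Fn n X) ?g = topspace (Fn n X)"
  proof (rule dense_intro)
    show "periodic_points (Fn n X) ?g \<subseteq> topspace (Fn n X)" unfolding periodic_points_def by blast
    fix W assume W: "openin (Fn n X) W" "W \<noteq> {}"
    have "q ` (W - F1) \<noteq> {}" "openin (SFn n X) (q ` (W - F1))"
      using W open_ne open_img by auto
    then obtain p where p: "p \<in> periodic_points (SFn n X) ?h" "p \<in> q ` (W - F1)"
      using dense_meet[OF dn] by blast
    then obtain B where B: "B \<in> W" "B \<notin> F1" "p = {B}" using q_nF1 by auto
    have BFS: "B \<in> FS" using B(1) openin_subset[OF W(1)] TS by auto
    obtain k where k: "k \<ge> 1" "(?h ^^ k) p = p" using p(1) unfolding periodic_points_def by blast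
    have "q ((?g ^^ k) B) = {B}" using k(2) B it[OF BFS, of k] q_nF1 by simp
    then have "(?g ^^ k) B = B" using q_eq_single B(2) by blast
    then have "B \<in> periodic_points (Fn n X) ?g" using k(1) BFS TS unfolding periodic_points_def by auto
    then show "\<exists>p\<in>periodic_points (Fn n X) ?g. p \<in> W" using B(1) by blast
  qed
  ultimately show ?thesis unfolding F_system_def by blast
qed

lemma two_to_one:
  assumes F: "F_system (Fn n X) (Fn_map f)"
  shows "F_system X f"
proof -
  let ?g = "Fn_map f"
  have tt: "totally_transitive (Fn n X) ?g" and dn: "Fn n X closure_of periodic_points (Fn n X) ?g = topspace (Fn n X)"
    using F unfolding F_system_def by auto
  have sing: "{x} \<in> {A \<in> FS. A \<subseteq> U}" if "x \<in> U" "openin X U" for x U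
    using that n2 openin_subset[OF that(2)] unfolding Fn_set_def by auto
  have "totally_transitive X f"
    unfolding totally_transitive_def dyn_transitive_def
  proof (intro allI impI)
    fix m :: nat and U V
    assume m: "m \<ge> 1" and UV: "openin X U \<and> U \<noteq> {} \<and> openin X V \<and> V \<noteq> {}"
    obtain u v where uv: "u \<in> U" "v \<in> V" using UV by blast
    have a: "{A \<in> FS. A \<subseteq> U} \<noteq> {}" "{A \<in> FS. A \<subseteq> V} \<noteq> {}"
      using sing[OF uv(1)] sing[OF uv(2)] UV by auto
    have b: "openin (Fn n X) {A \<in> FS. A \<subseteq> U}" "openin (Fn n X) {A \<in> FS. A \<subseteq> V}"
      using UV open_sub by auto
    obtain k where k: "k \<ge> 1" "((?g ^^ m) ^^ k) ` {A \<in> FS. A \<subseteq> U} \<inter> {A \<in> FS. A \<subseteq> V} \<noteq> {}"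
      using dtD[OF ttD[OF tt m] b(1) a(1) b(2) a(2)] by blast
    then obtain A where A: "A \<in> FS" "A \<subseteq> U" "(f ^^ (m*k)) ` A \<subseteq> V"
      by (auto simp: funpow_mult Fn_map_funpow)
    then obtain a where "a \<in> A" unfolding Fn_set_def by auto
    then show "\<exists>k\<ge>1. ((f ^^ m) ^^ k) ` U \<inter> V \<noteq> {}" using k(1) A
      by (intro exI[of _ k]) (auto simp: funpow_mult)
  qed
  moreover have "X closure_of periodic_points X f = topspace X"
  proof (rule dense_intro)
    show "periodic_points X f \<subseteq> topspace X" unfolding periodic_points_def by blast
    fix W assume W: "openin X W" "W \<noteq> {}"
    obtain w where "w \<in> W" using W by blast
    have "{A \<in> FS. A \<subseteq> W} \<noteq> {}" using sing[OF \<open>w \<in> W\<close> W(1)] by auto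
    then obtain A where A: "A \<in> periodic_points (Fn n X) ?g" "A \<in> FS" "A \<subseteq> W"
      using dense_meet[OF dn open_sub[OF W(1)]] by blast
    then obtain k where k: "k \<ge> 1" "(f ^^ k) ` A = A"
      unfolding periodic_points_def by (auto simp: Fn_map_funpow)
    obtain a where a: "a \<in> A" using A(2) unfolding Fn_set_def by auto
    have "finite A" using A(2) unfolding Fn_set_def by auto
    then obtain b d where bd: "b \<in> A" "d \<ge> 1" "((f ^^ k) ^^ d) b = b"
      using orbit_periodic[of A "f ^^ k" a] k a by auto
    have "(f ^^ (k*d)) b = b" "k * d \<ge> 1" using bd k by (auto simp: funpow_mult)
    moreover have "b \<in> topspace X" using bd A(2) unfolding Fn_set_def by auto
    ultimately have "b \<in> periodic_points X f" unfolding periodic_points_def by blast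
    then show "\<exists>p\<in>periodic_points X f. p \<in> W" using bd A(3) by blast
  qed
  ultimately show ?thesis unfolding F_system_def by blast
qed

end

theorem theorem19:
  fixes X :: "'a topology" and n :: nat and f :: "'a \<Rightarrow> 'a"
  assumes "compactum X" and "n \<ge> 2"
    and "f ` topspace X \<subseteq> topspace X"
  shows "(F_system (Fn n X) (Fn_map f) \<longleftrightarrow> F_system (SFn n X) (SFn_map n X f))
       \<and> (F_system (Fn n X) (Fn_map f) \<longrightarrow> F_system X f)"
proof -
  interpret setting X n f using assms by unfold_locales
  show ?thesis using two_to_three three_to_two two_to_one by blast
qed

end
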